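(* Let $X$ be a Minkowski space of dimension at least $2$ whose closed unit ball is a polytope with $f$ facets. Then $m(X)\leq f-1$.
   Context: A Minkowski space is a finite-dimensional real normed space $(X,\|\cdot\|)$. For a set $S\subseteq X$, its midpoint set is $M(S)=\{\tfrac12(x+y): x,y\in S,\ x\neq y\}$. A set $S\subseteq X$ is an M-set if every vector in $M(S)$ has norm exactly $1$ and every vector in $S$ has norm strictly greater than $1$. $m(X)$ denotes the largest cardinality of an M-set in $X$ if such a largest finite cardinality exists, and $m(X)=\infty$ otherwise. *)

theory Defs
  imports "HOL-Analysis.Analysis"
begin

text \<open>A Minkowski space is modelled as a finite-dimensional real vector space
(a type of class euclidean_space, used only for its linear/affine structure)
equipped with an arbitrary norm N.\<close>

definition is_norm :: "('a::real_vector \<Rightarrow> real) \<Rightarrow> bool" where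
  "is_norm N \<longleftrightarrow>
     (\<forall>x. N x = 0 \<longleftrightarrow> x = 0) \<and>
     (\<forall>c x. N (c *\<^sub>R x) = \<bar>c\<bar> * N x) \<and>
     (\<forall>x y. N (x + y) \<le> N x + N y)"

definition midpoint_set :: "'a::real_vector set \<Rightarrow> 'a set" where
  "midpoint_set S = {(1/2) *\<^sub>R (x + y) | x y. x \<in> S \<and> y \<in> S \<and> x \<noteq> y}"

definition is_M_set :: "('a::real_vector \<Rightarrow> real) \<Rightarrow> 'a set \<Rightarrow> bool" where
  "is_M_set N S \<longleftrightarrow> (\<forall>z \<in> midpoint_set S. N z = 1) \<and> (\<forall>x \<in> S. N x > 1)"

end

theory Submission
  imports Defs
begin



lemma normN:
  assumes "is_norm N"
  shows "N 0 = 0" "N (-v) = N v" "N v \<ge> 0" "N (c *\<^sub>R v) = \<bar>c\<bar> * N v"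
    "N (x + y) \<le> N x + N y" "N v = 0 \<longleftrightarrow> v = 0"
proof -
  show h: "N (c *\<^sub>R v) = \<bar>c\<bar> * N v" for c v using assms unfolding is_norm_def by blast
  show "N (x + y) \<le> N x + N y" for x y using assms unfolding is_norm_def by blast
  show "N v = 0 \<longleftrightarrow> v = 0" for v using assms unfolding is_norm_def by blast
  show "N 0 = 0" using assms unfolding is_norm_def by blast
  show "N (-v) = N v" using h[of "-1" v] by simp
  have "N (v + -v) \<le> N v + N (-v)" using assms unfolding is_norm_def by blast
  moreover have "N (-v) = N v" using h[of "-1" v] by simp
  moreover have "N 0 = 0" using assms unfolding is_norm_def by blast
  ultimately show "N v \<ge> 0" by simp
qed

definition rep :: "('a::euclidean_space \<Rightarrow> real) \<Rightarrow> 'a set \<Rightarrow> bool" where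
  "rep N A \<longleftrightarrow> finite A \<and> (\<forall>c\<in>A. -c \<in> A) \<and> (\<forall>v. N v \<le> 1 \<longleftrightarrow> (\<forall>c\<in>A. c \<bullet> v \<le> 1))"

lemma rep_P1:
  assumes "is_norm N" "rep N A" "c \<in> A"
  shows "c \<bullet> v \<le> N v"
proof (cases "N v = 0")
  case True then show ?thesis using normN[OF assms(1)] by simp
next
  case False
  then have pos: "N v > 0" using normN[OF assms(1)] by (simp add: order_less_le)
  have "N ((1 / N v) *\<^sub>R v) = 1" using pos normN(4)[OF assms(1)] by simp
  then have "\<forall>c\<in>A. c \<bullet> ((1 / N v) *\<^sub>R v) \<le> 1" using assms(2) unfolding rep_def by (metis order_refl)
  then have "c \<bullet> ((1 / N v) *\<^sub>R v) \<le> 1" using assms(3) by blast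
  then have "(c \<bullet> v) / N v \<le> 1" by simp
  then show ?thesis using pos by (simp add: divide_le_eq)
qed

lemma rep_P1':
  assumes "is_norm N" "rep N A" "c \<in> A"
  shows "- (c \<bullet> v) \<le> N v"
proof -
  have "-c \<in> A" using assms(2,3) unfolding rep_def by auto
  from rep_P1[OF assms(1,2) this] show ?thesis by simp
qed

lemma rep_P2:
  assumes "rep N A" "N v > 1"
  obtains c where "c \<in> A" "c \<bullet> v > 1"
  using assms unfolding rep_def by (meson not_le)

lemma rep_P3:
  assumes "is_norm N" "rep N A" "N m = 1"
  obtains c where "c \<in> A" "c \<bullet> m = 1"
proof -
  note th = that
  show thesis proof (rule ccontr)
  assume nc: "\<not> thesis"
  have le: "c \<bullet> m \<le> 1" if "c \<in> A" for c using assms that unfolding rep_def by auto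
  have lt: "c \<bullet> m < 1" if "c \<in> A" for c using le[OF that] nc that
    using th[OF that] by (metis order_less_le)
  have fin: "finite A" using assms(2) unfolding rep_def by auto
  define M where "M = Max (insert (1/2) ((\<lambda>c. c \<bullet> m) ` A))"
  have Mlt: "M < 1" unfolding M_def using fin lt by (subst Max_less_iff) auto
  have Mge: "M \<ge> 1/2" unfolding M_def using fin by (intro Max_ge) auto
  have cM: "c \<bullet> m \<le> M" if "c \<in> A" for c unfolding M_def using fin that by (intro Max_ge) auto
  have iff: "\<And>v. N v \<le> 1 \<longleftrightarrow> (\<forall>c\<in>A. c \<bullet> v \<le> 1)" using assms(2) unfolding rep_def by blast
  have "N ((1/M) *\<^sub>R m) \<le> 1"
  proof (subst iff, intro ballI)
    fix c assume "c \<in> A"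
    then have "c \<bullet> m \<le> M" by (rule cM)
    then show "c \<bullet> ((1/M) *\<^sub>R m) \<le> 1" using Mge by (simp add: divide_le_eq)
  qed
  then have "(1/M) * N m \<le> 1" using normN(4)[OF assms(1)] Mge by simp
  then show False using assms(3) Mlt Mge by (simp add: divide_le_eq)
qed
qed



lemma comb:
  fixes N :: "'a::euclidean_space \<Rightarrow> real"
  assumes nN: "is_norm N" and rA: "rep N A" and c3: "card A \<ge> 3" and MS: "is_M_set N S"
  shows "finite S \<and> card S < card A"
proof -
  have finA: "finite A" and symA: "\<And>c. c \<in> A \<Longrightarrow> -c \<in> A" using rA unfolding rep_def by auto
  have mid: "N ((1/2) *\<^sub>R (x + y)) = 1" if "x \<in> S" "y \<in> S" "x \<noteq> y" for x y
    using MS that unfolding is_M_set_def midpoint_set_def by blast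
  have big: "N x > 1" if "x \<in> S" for x using MS that unfolding is_M_set_def by blast
  have E1: "c \<bullet> x + c \<bullet> y \<le> 2" if "x \<in> S" "y \<in> S" "x \<noteq> y" "c \<in> A" for x y c
    using rep_P1[OF nN rA that(4), of "(1/2) *\<^sub>R (x + y)"] mid[OF that(1-3)]
    by (simp add: inner_add_right)
  have E2: "- (c \<bullet> x + c \<bullet> y) \<le> 2" if "x \<in> S" "y \<in> S" "x \<noteq> y" "c \<in> A" for x y c
    using rep_P1'[OF nN rA that(4), of "(1/2) *\<^sub>R (x + y)"] mid[OF that(1-3)]
    by (simp add: inner_add_right)
  have "\<forall>x\<in>S. \<exists>c. c \<in> A \<and> c \<bullet> x > 1"
    using rep_P2[OF rA big] by metis
  then obtain j where j: "\<And>x. x \<in> S \<Longrightarrow> j x \<in> A \<and> j x \<bullet> x > 1" by metis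
  have inj: "inj_on j S"
  proof (rule inj_onI, rule ccontr)
    fix x y assume xy: "x \<in> S" "y \<in> S" "j x = j y" "x \<noteq> y"
    from E1[OF xy(1,2,4), of "j x"] j[OF xy(1)] j[OF xy(2)] xy(3) show False by auto
  qed
  have jS: "j ` S \<subseteq> A" using j by auto
  have finS: "finite S" using inj jS finA by (meson finite_imageD finite_subset)
  have le: "card S \<le> card A" using card_inj_on_le[OF inj jS finA] .
  have neq: "card S \<noteq> card A"
  proof
    assume eq: "card S = card A"
    have jSA: "j ` S = A" using card_subset_eq[OF finA jS] card_image[OF inj] eq by simp
    have "S \<noteq> {}" using eq c3 by auto
    then obtain x where x: "x \<in> S" by auto
    define a where "a = j x"
    have aA: "a \<in> A" and ax: "a \<bullet> x > 1" using j[OF x] a_def by auto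
    have "-a \<in> A" using symA[OF aA] .
    then obtain x' where x': "x' \<in> S" "j x' = -a" using jSA by (metis imageE)
    have ax': "a \<bullet> x' < -1" using j[OF x'(1)] x'(2) by simp
    have xx': "x \<noteq> x'" using ax ax' by auto
    have "card (S - {x, x'}) \<ge> 1" using eq c3 x x'(1) finS xx' by (simp add: card_Diff_subset)
    then obtain y where y: "y \<in> S" "y \<noteq> x" "y \<noteq> x'"
      by (metis Diff_iff One_nat_def card.empty equals0I insertCI not_one_le_zero)
    obtain d where d: "d \<in> A" "d \<bullet> ((1/2) *\<^sub>R (x + x')) = 1"
      using rep_P3[OF nN rA mid[OF x x'(1) xx']] by blast
    then have dsum: "d \<bullet> x + d \<bullet> x' = 2" by (simp add: inner_add_right)
    obtain w where w: "w \<in> S" "d = j w" using jSA d(1) by auto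
    have dw: "d \<bullet> w > 1" using j[OF w(1)] w(2) by simp
    show False
    proof (cases "w = x")
      case True
      then have "d = a" using w a_def by simp
      then show False using E1[OF x y(1) y(2)[symmetric] aA] E2[OF x'(1) y(1) y(3)[symmetric] aA]
          dsum ax ax' by simp
    next
      case wx: False
      show False
      proof (cases "w = x'")
        case True
        then have "d = -a" using w x'(2) by simp
        then show False using E1[OF x'(1) y(1) y(3)[symmetric] symA[OF aA]]
            E2[OF x y(1) y(2)[symmetric] symA[OF aA]] dsum ax ax' by simp
      next
        case False
        then show False using E1[OF w(1) x wx d(1)] E1[OF w(1) x'(1) False d(1)] dw dsum by simp
      qed
    qed
  qed
  show ?thesis using finS le neq by simp
qed



lemma self_neg: "(c::'a::real_vector) = -c \<longleftrightarrow> c = 0"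
proof
  assume "c = -c"
  then have "c + c = 0" by (metis add.right_inverse)
  then have "2 *\<^sub>R c = 0" by (simp add: scaleR_2)
  then show "c = 0" by simp
qed simp

lemma card3:
  fixes N :: "'a::euclidean_space \<Rightarrow> real"
  assumes nN: "is_norm N" and rA: "rep N A" and D: "DIM('a) \<ge> 2"
  shows "card A \<ge> 3"
proof (rule ccontr)
  assume "\<not> card A \<ge> 3"
  then have c2: "card A \<le> 2" by simp
  have finA: "finite A" and symA: "\<And>c. c \<in> A \<Longrightarrow> -c \<in> A"
    and iff: "\<And>v. N v \<le> 1 \<longleftrightarrow> (\<forall>c\<in>A. c \<bullet> v \<le> 1)" using rA unfolding rep_def by auto
  have "\<exists>c. A \<subseteq> {c, -c}"
  proof (cases "A = {}")
    case True then show ?thesis by auto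
  next
    case False
    then obtain c where c: "c \<in> A" by auto
    show ?thesis
    proof (rule exI[of _ c], rule ccontr)
      assume "\<not> A \<subseteq> {c, -c}"
      then obtain d where d: "d \<in> A" "d \<noteq> c" "d \<noteq> -c" by auto
      show False
      proof (cases "d = 0")
        case True
        then have "{c, -c, d} \<subseteq> A" "card {c, -c, d} = 3" using c d symA[OF c] self_neg[of c]
          by (auto simp: card_insert_if)
        then have "3 \<le> card A" using card_mono[OF finA] by metis
        then show False using c2 by simp
      next
        case False
        have "-d \<noteq> d" using False using self_neg[of d] by metis
        then have "{c, d, -d} \<subseteq> A" "card {c, d, -d} = 3" using c d symA[OF d(1)]
          by (auto simp: card_insert_if)
        then have "3 \<le> card A" using card_mono[OF finA] by metis
        then show False using c2 by simp
      qed
    qed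
  qed
  then obtain c where cA: "A \<subseteq> {c, -c}" by blast
  have "card (Basis :: 'a set) \<ge> 2" using D by simp
  then obtain e1 e2 :: 'a where e: "e1 \<in> Basis" "e2 \<in> Basis" "e1 \<noteq> e2"
    by (metis card_2_iff' card_le_Suc_iff numeral_2_eq_2 Suc_le_D insertCI)
  define v where "v = (if c \<bullet> e1 = 0 then e1 else (c \<bullet> e2) *\<^sub>R e1 - (c \<bullet> e1) *\<^sub>R e2)"
  have cv: "c \<bullet> v = 0" unfolding v_def by (simp add: inner_diff_right algebra_simps)
  have v0: "v \<noteq> 0"
  proof (cases "c \<bullet> e1 = 0")
    case True then show ?thesis using e unfolding v_def by auto
  next
    case False
    have "v \<bullet> e2 = - (c \<bullet> e1)" unfolding v_def using False e
      by (simp add: inner_diff_left inner_Basis)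
    then show ?thesis using False by auto
  qed
  have Nv: "N v > 0" using normN[OF nN] v0 by (metis order_less_le)
  have "N ((2 / N v) *\<^sub>R v) \<le> 1"
    using cA cv by (subst iff) (auto simp: inner_commute)
  then show False using normN(4)[OF nN] Nv by simp
qed



lemma N_sum:
  assumes "is_norm N" "finite I"
  shows "N (\<Sum>i\<in>I. f i) \<le> (\<Sum>i\<in>I. N (f i))"
  using assms(2)
proof (induction rule: finite_induct)
  case empty then show ?case using normN(1)[OF assms(1)] by simp
next
  case (insert x F)
  then show ?case using normN(5)[OF assms(1), of "f x" "sum f F"] by simp
qed

lemma N_bound:
  fixes N :: "'a::euclidean_space \<Rightarrow> real"
  assumes nN: "is_norm N"
  shows "N v \<le> (\<Sum>i\<in>Basis. N i) * norm v"
proof -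
  have "N v = N (\<Sum>i\<in>Basis. (v \<bullet> i) *\<^sub>R i)" by (simp add: euclidean_representation)
  also have "\<dots> \<le> (\<Sum>i\<in>Basis. N ((v \<bullet> i) *\<^sub>R i))" by (rule N_sum[OF nN]) simp
  also have "\<dots> = (\<Sum>i\<in>Basis. \<bar>v \<bullet> i\<bar> * N i)" using normN(4)[OF nN] by simp
  also have "\<dots> \<le> (\<Sum>i\<in>Basis. norm v * N i)"
    by (intro sum_mono mult_right_mono Basis_le_norm normN(3)[OF nN])
  also have "\<dots> = (\<Sum>i\<in>Basis. N i) * norm v" by (simp add: sum_distrib_left mult.commute)
  finally show ?thesis .
qed

lemma ball_sub:
  fixes N :: "'a::euclidean_space \<Rightarrow> real"
  assumes nN: "is_norm N"
  obtains r where "r > 0" "ball 0 r \<subseteq> {x. N x \<le> 1}"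
proof -
  define K where "K = (\<Sum>i\<in>Basis. N (i::'a))"
  have K0: "K \<ge> 0" unfolding K_def using normN(3)[OF nN] by (simp add: sum_nonneg)
  have "ball 0 (1/(K+1)) \<subseteq> {x. N x \<le> 1}"
  proof
    fix x :: 'a assume "x \<in> ball 0 (1/(K+1))"
    then have nx: "norm x < 1/(K+1)" by simp
    have "N x \<le> K * norm x" using N_bound[OF nN] K_def by simp
    also have "\<dots> \<le> (K+1) * norm x" by (simp add: algebra_simps)
    also have "\<dots> \<le> 1" using nx K0 by (simp add: field_simps)
    finally show "x \<in> {x. N x \<le> 1}" by simp
  qed
  moreover have "1/(K+1) > 0" using K0 by simp
  ultimately show ?thesis using that by blast
qed

lemma rep_exists:
  fixes N :: "'a::euclidean_space \<Rightarrow> real"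
  assumes nN: "is_norm N" and P: "polytope {x. N x \<le> 1}"
  shows "\<exists>A. rep N A"
proof -
  let ?B = "{x. N x \<le> 1}"
  obtain r where r: "r > 0" "ball 0 r \<subseteq> ?B" using ball_sub[OF nN] by blast
  have "polyhedron ?B" using P polytope_imp_polyhedron by blast
  then obtain F where F: "finite F" "?B = \<Inter>F" "\<forall>h\<in>F. \<exists>a b. a \<noteq> 0 \<and> h = {x. a \<bullet> x \<le> b}"
    unfolding polyhedron_def by blast
  then obtain a b where ab: "\<And>h. h \<in> F \<Longrightarrow> a h \<noteq> 0 \<and> h = {x. a h \<bullet> x \<le> b h}" by metis
  have bpos: "b h > 0" if h: "h \<in> F" for h
  proof -
    define p where "p = (r / (2 * norm (a h))) *\<^sub>R a h"
    have na: "norm (a h) > 0" using ab[OF h] by simp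
    have "norm p = r/2" unfolding p_def using na r by simp
    then have "p \<in> ball 0 r" using r by simp
    then have "p \<in> ?B" using r by blast
    then have "p \<in> h" using F(2) h by blast
    then have "a h \<bullet> p \<le> b h" using ab[OF h] by blast
    moreover have "a h \<bullet> p = r/2 * norm (a h)" unfolding p_def using na
      by (simp add: power2_norm_eq_inner[symmetric] power2_eq_square)
    moreover have "r/2 * norm (a h) > 0" using na r by simp
    ultimately show ?thesis by linarith
  qed
  define A0 where "A0 = (\<lambda>h. (1 / b h) *\<^sub>R a h) ` F"
  define A where "A = A0 \<union> uminus ` A0"
  have Bchar: "N v \<le> 1 \<longleftrightarrow> (\<forall>c\<in>A0. c \<bullet> v \<le> 1)" for v
  proof -
    have "N v \<le> 1 \<longleftrightarrow> (\<forall>h\<in>F. a h \<bullet> v \<le> b h)"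
    proof -
      have "N v \<le> 1 \<longleftrightarrow> v \<in> \<Inter>F" using F(2) by blast
      also have "\<dots> \<longleftrightarrow> (\<forall>h\<in>F. a h \<bullet> v \<le> b h)" using ab by blast
      finally show ?thesis .
    qed
    also have "\<dots> \<longleftrightarrow> (\<forall>h\<in>F. ((1 / b h) *\<^sub>R a h) \<bullet> v \<le> 1)"
      using bpos by (simp add: divide_le_eq)
    finally show ?thesis unfolding A0_def by simp
  qed
  have "rep N A"
    unfolding rep_def
  proof (intro conjI allI ballI)
    show "finite A" unfolding A_def A0_def using F(1) by simp
    show "- c \<in> A" if "c \<in> A" for c using that unfolding A_def by auto
    show "N v \<le> 1 \<longleftrightarrow> (\<forall>c\<in>A. c \<bullet> v \<le> 1)" for v
    proof
      assume h: "N v \<le> 1"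
      then have "N (-v) \<le> 1" using normN(2)[OF nN] by simp
      then show "\<forall>c\<in>A. c \<bullet> v \<le> 1" using h Bchar unfolding A_def by auto
    next
      assume "\<forall>c\<in>A. c \<bullet> v \<le> 1"
      then show "N v \<le> 1" using Bchar unfolding A_def by auto
    qed
  qed
  then show ?thesis by blast
qed



lemma irred:
  fixes N :: "'a::euclidean_space \<Rightarrow> real"
  assumes rA: "rep N A" and minA: "\<And>A'. rep N A' \<Longrightarrow> card A \<le> card A'" and cA: "c \<in> A"
  shows "\<exists>z. (\<forall>c'\<in>A - {c}. c' \<bullet> z \<le> 1) \<and> c \<bullet> z > 1"
proof (rule ccontr)
  assume "\<not> ?thesis"
  then have red: "\<And>z. (\<forall>c'\<in>A - {c}. c' \<bullet> z \<le> 1) \<Longrightarrow> c \<bullet> z \<le> 1" by (meson not_le)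
  have finA: "finite A" and symA: "\<And>c. c \<in> A \<Longrightarrow> -c \<in> A"
    and iff: "\<And>v. N v \<le> 1 \<longleftrightarrow> (\<forall>c\<in>A. c \<bullet> v \<le> 1)" using rA unfolding rep_def by auto
  define A' where "A' = A - {c, -c}"
  have sub: "c \<bullet> u \<le> 1" if u: "\<forall>c'\<in>A'. c' \<bullet> u \<le> 1" for u
  proof (rule ccontr)
    assume "\<not> c \<bullet> u \<le> 1"
    then have "(-c) \<bullet> u \<le> 1" by simp
    then have "\<forall>c'\<in>A - {c}. c' \<bullet> u \<le> 1" using u unfolding A'_def by auto
    then show False using red \<open>\<not> c \<bullet> u \<le> 1\<close> by blast
  qed
  have "rep N A'"
    unfolding rep_def
  proof (intro conjI allI ballI)
    show "finite A'" unfolding A'_def using finA by simp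
    show "- d \<in> A'" if "d \<in> A'" for d using that symA unfolding A'_def by auto
    show "N v \<le> 1 \<longleftrightarrow> (\<forall>c\<in>A'. c \<bullet> v \<le> 1)" for v
    proof
      assume "N v \<le> 1" then show "\<forall>c\<in>A'. c \<bullet> v \<le> 1" using iff unfolding A'_def by auto
    next
      assume h: "\<forall>c\<in>A'. c \<bullet> v \<le> 1"
      have h': "\<forall>c'\<in>A'. c' \<bullet> (-v) \<le> 1"
      proof
        fix d assume "d \<in> A'"
        then have "-d \<in> A'" using symA unfolding A'_def by auto
        then show "d \<bullet> (-v) \<le> 1" using h by force
      qed
      have "c \<bullet> v \<le> 1" using sub[OF h] .
      moreover have "(-c) \<bullet> v \<le> 1" using sub[OF h'] by simp
      ultimately show "N v \<le> 1" using h iff unfolding A'_def by auto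
    qed
  qed
  moreover have "A' \<subset> A" using cA unfolding A'_def by blast
  then have "card A' < card A" using psubset_card_mono[OF finA] by blast
  ultimately show False using minA by fastforce
qed

lemma card_le_facets:
  fixes N :: "'a::euclidean_space \<Rightarrow> real"
  assumes nN: "is_norm N" and P: "polytope {x. N x \<le> 1}"
    and rA: "rep N A" and irr: "\<And>c. c \<in> A \<Longrightarrow> \<exists>z. (\<forall>c'\<in>A - {c}. c' \<bullet> z \<le> 1) \<and> c \<bullet> z > 1"
  shows "card A \<le> card {F. F facet_of {x. N x \<le> 1}}"
proof -
  let ?B = "{x. N x \<le> 1}"
  have finA: "finite A" and iff: "\<And>v. N v \<le> 1 \<longleftrightarrow> (\<forall>c\<in>A. c \<bullet> v \<le> 1)"
    using rA unfolding rep_def by auto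
  obtain r where r: "r > 0" "ball 0 r \<subseteq> ?B" using ball_sub[OF nN] by blast
  have "0 \<in> interior ?B" unfolding mem_interior using r by blast
  then have "interior ?B \<noteq> {}" by blast
  then have aff: "affine hull ?B = UNIV" by (rule affine_hull_nonempty_interior)
  have polyh: "polyhedron ?B" using P polytope_imp_polyhedron by blast
  define H where "H c = {x. c \<bullet> x \<le> (1::real)}" for c :: 'a
  have injH: "inj_on H A"
  proof (rule inj_onI, rule ccontr)
    fix c1 c2 assume h: "c1 \<in> A" "c2 \<in> A" "H c1 = H c2" "c1 \<noteq> c2"
    obtain z where z: "\<forall>c'\<in>A - {c1}. c' \<bullet> z \<le> 1" "c1 \<bullet> z > 1" using irr[OF h(1)] by blast
    have "z \<in> H c2" using z(1) h unfolding H_def by auto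
    then have "z \<in> H c1" using h by simp
    then show False using z(2) unfolding H_def by simp
  qed
  define F where "F = H ` A"
  define a where "a h = inv_into A H h" for h
  define b where "b h = (1::real)" for h :: "'a set"
  have aA: "a h \<in> A" "H (a h) = h" if "h \<in> F" for h
    using that unfolding F_def a_def by (auto simp: inv_into_into f_inv_into_f)
  have a0: "0 \<notin> A"
  proof
    assume "0 \<in> A" then show False using irr[of 0] by auto
  qed
  have faceq: "a h \<noteq> 0 \<and> h = {x. a h \<bullet> x \<le> b h}" if "h \<in> F" for h
  proof
    show "a h \<noteq> 0" using aA(1)[OF that] a0 by auto
    show "h = {x. a h \<bullet> x \<le> b h}" using aA(2)[OF that] unfolding H_def b_def by simp
  qed
  have seq: "?B = affine hull ?B \<inter> \<Inter>F"
  proof -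
    have "x \<in> ?B \<longleftrightarrow> x \<in> \<Inter>F" for x
    proof -
      have "x \<in> ?B \<longleftrightarrow> (\<forall>c\<in>A. c \<bullet> x \<le> 1)" using iff[of x] by simp
      also have "\<dots> \<longleftrightarrow> x \<in> \<Inter>F" unfolding F_def H_def by blast
      finally show ?thesis .
    qed
    then show ?thesis unfolding aff by blast
  qed
  have psub: "?B \<subset> affine hull ?B \<inter> \<Inter>F'" if FF: "F' \<subset> F" for F'
  proof -
    obtain h where h: "h \<in> F" "h \<notin> F'" using FF by blast
    then obtain c where c: "c \<in> A" "h = H c" unfolding F_def by blast
    obtain z where z: "\<forall>c'\<in>A - {c}. c' \<bullet> z \<le> 1" "c \<bullet> z > 1" using irr[OF c(1)] by blast
    have "z \<in> \<Inter>F'"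
    proof
      fix h' assume "h' \<in> F'"
      then obtain c' where c': "c' \<in> A" "h' = H c'" using FF unfolding F_def by blast
      then have "c' \<noteq> c" using h c \<open>h' \<in> F'\<close> by blast
      then show "z \<in> h'" using z c' unfolding H_def by auto
    qed
    moreover have "z \<notin> ?B" using iff[of z] z(2) c(1) by auto
    moreover have "?B \<subseteq> \<Inter>F'" using seq FF by blast
    ultimately show ?thesis unfolding aff by blast
  qed
  have fin: "finite F" unfolding F_def using finA by simp
  note expl = facet_of_polyhedron_explicit[OF fin seq faceq psub]
  define g where "g c = ?B \<inter> {x. c \<bullet> x = 1}" for c
  have gfac: "g c facet_of ?B" if "c \<in> A" for c
  proof -
    have "H c \<in> F" using that unfolding F_def by blast
    moreover have "a (H c) = c" unfolding a_def using injH that by (simp add: inv_into_f_f)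
    ultimately have "\<exists>h. h \<in> F \<and> g c = ?B \<inter> {x. a h \<bullet> x = b h}"
      unfolding g_def b_def by (intro exI[of _ "H c"]) simp
    then show ?thesis using expl by blast
  qed
  have injg: "inj_on g A"
  proof (rule inj_onI, rule ccontr)
    fix c1 c2 assume h: "c1 \<in> A" "c2 \<in> A" "g c1 = g c2" "c1 \<noteq> c2"
    obtain z where z: "\<forall>c'\<in>A - {c1}. c' \<bullet> z \<le> 1" "c1 \<bullet> z > 1" using irr[OF h(1)] by blast
    define p where "p = (1 / (c1 \<bullet> z)) *\<^sub>R z"
    have p1: "c1 \<bullet> p = 1" unfolding p_def using z(2) by simp
    have plt: "c' \<bullet> p < 1" if "c' \<in> A - {c1}" for c'
    proof -
      have "c' \<bullet> z \<le> 1" using z(1) that by blast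
      then have "c' \<bullet> z < c1 \<bullet> z" using z(2) by linarith
      then show ?thesis unfolding p_def using z(2) by (simp add: divide_less_eq)
    qed
    have "\<forall>c\<in>A. c \<bullet> p \<le> 1"
    proof
      fix c assume "c \<in> A"
      then show "c \<bullet> p \<le> 1" using p1 plt[of c] by (cases "c = c1") auto
    qed
    then have "p \<in> ?B" using iff by simp
    then have "p \<in> g c1" unfolding g_def using p1 by simp
    then have "p \<in> g c2" using h by simp
    then have "c2 \<bullet> p = 1" unfolding g_def by simp
    then show False using plt[of c2] h by simp
  qed
  have "g ` A \<subseteq> {F. F facet_of ?B}" using gfac by blast
  moreover have "finite {F. F facet_of ?B}" using finite_polyhedron_facets[OF polyh] .
  ultimately show ?thesis using card_inj_on_le[OF injg] by (metis (no_types, lifting))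
qed

theorem mainTheorem16:
  fixes N :: "'a::euclidean_space \<Rightarrow> real"
  assumes "is_norm N"
    and "DIM('a) \<ge> 2"
    and "polytope {x. N x \<le> 1}"
    and "f = card {F. F facet_of {x. N x \<le> 1}}"
  shows "\<forall>S. is_M_set N S \<longrightarrow> finite S \<and> card S \<le> f - 1"
proof (intro allI impI)
  fix S assume MS: "is_M_set N S"
  obtain A0 where "rep N A0" using rep_exists[OF assms(1,3)] by blast
  then obtain A where rA: "rep N A" and minA: "\<And>A'. rep N A' \<Longrightarrow> card A \<le> card A'"
    using ex_has_least_nat[of "rep N" A0 card] by blast
  have irr: "\<And>c. c \<in> A \<Longrightarrow> \<exists>z. (\<forall>c'\<in>A - {c}. c' \<bullet> z \<le> 1) \<and> c \<bullet> z > 1"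
    using irred[OF rA minA] by blast
  have "card A \<le> f" using card_le_facets[OF assms(1,3) rA irr] assms(4) by simp
  moreover have "card A \<ge> 3" using card3[OF assms(1) rA assms(2)] .
  moreover have "finite S \<and> card S < card A" using comb[OF assms(1) rA \<open>card A \<ge> 3\<close> MS] .
  ultimately show "finite S \<and> card S \<le> f - 1" by linarith
qed


end
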